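(* Let $d\ge2$, $r\ge1$, $l_1,\dots,l_r\in\{1,\dots,d\}$ with $\sum_{j=1}^r l_j\le d$, and $l=d-\sum_{j=1}^r(l_j-1)$. Let $A\in\mathbf H(d;l_1,\dots,l_r)$ have a spectral decomposition $A=PDP^*$ with $P\in\mathbf U(d)$ and $D$ a real diagonal $d\times d$ matrix, and suppose $A$ has exactly $l$ distinct eigenvalues. Then for every $\varepsilon>0$ there is $\delta>0$ such that for every $B\in\mathbf H(d;l_1,\dots,l_r)$ with $\max_{1\le i,j\le d}|A_{i,j}-B_{i,j}|<\delta$, the matrix $B$ has exactly $l$ distinct eigenvalues and admits a spectral decomposition $B=QFQ^*$ with $Q\in\mathbf U(d)$, $F$ real diagonal, such that $\max_{1\le i\le d}|D_{i,i}-F_{i,i}|<\varepsilon$ and $\max_{1\le i,j\le d}|Q_{i,j}-P_{i,j}|<\varepsilon$.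
   Context: $\mathbf U(d)$ is the group of $d\times d$ unitary matrices. For a complex Hermitian $d\times d$ matrix $x$ let $E_1(x)\le\cdots\le E_d(x)$ be its eigenvalues. $\mathbf H(d;l_1,\dots,l_r)$ is the set of complex Hermitian $d\times d$ matrices $x$ for which there exist pairwise disjoint $J_1,\dots,J_r\subseteq\{1,\dots,d\}$ with $|J_j|=l_j$ such that, for each $j$, the values $E_i(x)$, $i\in J_j$, are all equal. *)

theory Defs
  imports "HOL-Analysis.Analysis" "Jordan_Normal_Form.Schur_Decomposition"
begin

text \<open>Matrices are Jordan_Normal_Form matrices (entries indexed 0..d-1).\<close>

definition unitary_mat :: "nat \<Rightarrow> complex mat \<Rightarrow> bool" where
  "unitary_mat d P \<longleftrightarrow> P \<in> carrier_mat d d \<and> P * mat_adjoint P = 1\<^sub>m d \<and> mat_adjoint P * P = 1\<^sub>m d"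

definition hermitian_mat :: "nat \<Rightarrow> complex mat \<Rightarrow> bool" where
  "hermitian_mat d A \<longleftrightarrow> A \<in> carrier_mat d d \<and> mat_adjoint A = A"

definition real_diagonal_mat :: "nat \<Rightarrow> complex mat \<Rightarrow> bool" where
  "real_diagonal_mat d D \<longleftrightarrow> D \<in> carrier_mat d d \<and> diagonal_mat D \<and> (\<forall>i<d. D $$ (i,i) \<in> \<real>)"

definition eig_list :: "nat \<Rightarrow> complex mat \<Rightarrow> real list" where
  "eig_list d x = (THE es. length es = d \<and> sorted es \<and>
      char_poly x = prod_list (map (\<lambda>e. [:- complex_of_real e, 1:]) es))"

text \<open>E_i(x) for 1 \<le> i \<le> d, so that E_1(x) \<le> ... \<le> E_d(x).\<close>
definition E :: "nat \<Rightarrow> complex mat \<Rightarrow> nat \<Rightarrow> real" where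
  "E d x i = eig_list d x ! (i - 1)"

text \<open>The set H(d; l_1,...,l_r); the l_j are given by the function ls on {1..r}.\<close>
definition Hset :: "nat \<Rightarrow> nat \<Rightarrow> (nat \<Rightarrow> nat) \<Rightarrow> complex mat set" where
  "Hset d r ls = {x. hermitian_mat d x \<and>
     (\<exists>J :: nat \<Rightarrow> nat set.
        (\<forall>j\<in>{1..r}. J j \<subseteq> {1..d} \<and> card (J j) = ls j) \<and>
        (\<forall>j\<in>{1..r}. \<forall>j'\<in>{1..r}. j \<noteq> j' \<longrightarrow> J j \<inter> J j' = {}) \<and>
        (\<forall>j\<in>{1..r}. \<forall>i\<in>J j. \<forall>i'\<in>J j. E d x i = E d x i'))}"

end

theory Submission
  imports Defs
begin


lemma adj_dims[simp]: "dim_row (mat_adjoint A) = dim_col A" "dim_col (mat_adjoint A) = dim_row A"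
  unfolding mat_adjoint_def mat_of_rows_def by auto

lemma adj_index[simp]: "i < dim_col A \<Longrightarrow> j < dim_row A \<Longrightarrow>
  mat_adjoint A $$ (i,j) = cnj (A $$ (j,i))"
  unfolding mat_adjoint_def mat_of_rows_def by auto

lemma adj_carrier[simp]: "A \<in> carrier_mat n m \<Longrightarrow> mat_adjoint A \<in> carrier_mat m n"
  unfolding carrier_mat_def by auto

lemma adj_adj[simp]: "mat_adjoint (mat_adjoint (A::complex mat)) = A"
  by (rule eq_matI, auto)

lemma mult_entry: "A \<in> carrier_mat n k \<Longrightarrow> B \<in> carrier_mat k m \<Longrightarrow> i < n \<Longrightarrow> j < m \<Longrightarrow>
  (A * B) $$ (i,j) = (\<Sum>t<k. A $$ (i,t) * B $$ (t,j))"
  by (auto simp: scalar_prod_def intro!: sum.cong)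

lemma adj_mult: assumes "(A::complex mat) \<in> carrier_mat n k" "B \<in> carrier_mat k m"
  shows "mat_adjoint (A * B) = mat_adjoint B * mat_adjoint A"
proof (rule eq_matI)
  fix i j assume "i < dim_row (mat_adjoint B * mat_adjoint A)" "j < dim_col (mat_adjoint B * mat_adjoint A)"
  then have i: "i < m" and j: "j < n" using assms by auto
  have "mat_adjoint (A * B) $$ (i,j) = cnj ((A*B) $$ (j,i))" using assms i j by simp
  also have "\<dots> = (\<Sum>t<k. cnj (A $$ (j,t)) * cnj (B $$ (t,i)))" 
    using assms i j by (simp add: mult_entry[OF assms j i] cnj_sum)
  also have "\<dots> = (mat_adjoint B * mat_adjoint A) $$ (i,j)"
    using assms i j by (subst mult_entry[of _ m k _ n], auto simp: mult.commute intro!: sum.cong)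
  finally show "mat_adjoint (A * B) $$ (i,j) = (mat_adjoint B * mat_adjoint A) $$ (i,j)" .
qed (insert assms, auto)

lemma adj_one[simp]: "mat_adjoint (1\<^sub>m n :: complex mat) = 1\<^sub>m n"
  by (rule eq_matI, auto)

lemma unitary_mult: assumes "unitary_mat n U" "unitary_mat n V"
  shows "unitary_mat n (U * V)"
proof -
  have U: "U \<in> carrier_mat n n" and V: "V \<in> carrier_mat n n" using assms unfolding unitary_mat_def by auto
  have aU: "mat_adjoint U \<in> carrier_mat n n" and aV: "mat_adjoint V \<in> carrier_mat n n" using U V by auto
  have "U * V * mat_adjoint (U * V) = U * V * (mat_adjoint V * mat_adjoint U)"
    by (simp add: adj_mult[OF U V])
  also have "\<dots> = U * (V * (mat_adjoint V * mat_adjoint U))"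
    by (rule assoc_mult_mat[OF U V mult_carrier_mat[OF aV aU]])
  also have "\<dots> = U * ((V * mat_adjoint V) * mat_adjoint U)"
    by (simp add: assoc_mult_mat[OF V aV aU])
  also have "\<dots> = 1\<^sub>m n" using assms left_mult_one_mat[OF aU] unfolding unitary_mat_def by simp
  finally have 1: "U * V * mat_adjoint (U * V) = 1\<^sub>m n" .
  have "mat_adjoint (U * V) * (U * V) = (mat_adjoint V * mat_adjoint U) * (U * V)"
    by (simp add: adj_mult[OF U V])
  also have "\<dots> = mat_adjoint V * (mat_adjoint U * (U * V))"
    by (rule assoc_mult_mat[OF aV aU mult_carrier_mat[OF U V]])
  also have "\<dots> = mat_adjoint V * ((mat_adjoint U * U) * V)"
    by (simp add: assoc_mult_mat[OF aU U V])
  also have "\<dots> = 1\<^sub>m n" using assms left_mult_one_mat[OF V] unfolding unitary_mat_def by simp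
  finally show ?thesis using 1 U V unfolding unitary_mat_def by auto
qed

lemma unitary_adj: "unitary_mat n U \<Longrightarrow> unitary_mat n (mat_adjoint U)"
  unfolding unitary_mat_def by auto

lemma diag_mult_left: assumes "M \<in> carrier_mat n n" "diagonal_mat M" "(X::complex mat) \<in> carrier_mat n m" "i < n" "j < m"
  shows "(M * X) $$ (i,j) = M $$ (i,i) * X $$ (i,j)"
proof -
  have "(M * X) $$ (i,j) = (\<Sum>t<n. M $$ (i,t) * X $$ (t,j))" using assms by (intro mult_entry) auto
  also have "\<dots> = (\<Sum>t<n. if t = i then M $$ (i,i) * X $$ (i,j) else 0)"
    using assms by (intro sum.cong, auto simp: diagonal_mat_def)
  finally have "(M * X) $$ (i,j) = (\<Sum>t<n. if t = i then M $$ (i,i) * X $$ (i,j) else 0)" .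
  then show ?thesis using assms by simp
qed

lemma diag_mult_right: assumes "M \<in> carrier_mat m m" "diagonal_mat M" "(X::complex mat) \<in> carrier_mat n m" "i < n" "j < m"
  shows "(X * M) $$ (i,j) = X $$ (i,j) * M $$ (j,j)"
proof -
  have "(X * M) $$ (i,j) = (\<Sum>t<m. X $$ (i,t) * M $$ (t,j))" using assms by (intro mult_entry) auto
  also have "\<dots> = (\<Sum>t<m. if t = j then X $$ (i,j) * M $$ (j,j) else 0)"
    using assms by (intro sum.cong, auto simp: diagonal_mat_def)
  finally have "(X * M) $$ (i,j) = (\<Sum>t<m. if t = j then X $$ (i,j) * M $$ (j,j) else 0)" .
  then show ?thesis using assms by simp
qed

lemma unitary_entry_le: assumes "unitary_mat n U" "i < n" "j < n"
  shows "cmod (U $$ (i,j)) \<le> 1"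
proof -
  have U: "U \<in> carrier_mat n n" using assms unfolding unitary_mat_def by auto
  have "1 = (mat_adjoint U * U) $$ (j,j)" using assms unfolding unitary_mat_def by simp
  also have "\<dots> = (\<Sum>t<n. mat_adjoint U $$ (j,t) * U $$ (t,j))" using U assms by (intro mult_entry) auto
  also have "\<dots> = (\<Sum>t<n. cnj (U $$ (t,j)) * U $$ (t,j))" using U assms by (intro sum.cong) auto
  also have "\<dots> = (\<Sum>t<n. complex_of_real ((cmod (U $$ (t,j)))^2))"
    by (intro sum.cong refl) (metis complex_norm_square mult.commute of_real_power)
  also have "\<dots> = of_real (\<Sum>t<n. (cmod (U $$ (t,j)))^2)" by simp
  finally have s: "(\<Sum>t<n. (cmod (U $$ (t,j)))^2) = 1"
    by (metis of_real_eq_1_iff)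
  have "(cmod (U $$ (i,j)))^2 \<le> (\<Sum>t<n. (cmod (U $$ (t,j)))^2)"
    using assms by (intro member_le_sum) auto
  then have "(cmod (U $$ (i,j)))^2 \<le> 1" using s by simp
  then show ?thesis by (metis abs_norm_cancel abs_square_le_1)
qed

lemma unitary_col_nonzero: assumes "unitary_mat n U" "j < n"
  shows "\<exists>i<n. U $$ (i,j) \<noteq> 0"
proof (rule ccontr)
  assume "\<not> ?thesis"
  then have z: "\<forall>i<n. U $$ (i,j) = 0" by auto
  have U: "U \<in> carrier_mat n n" using assms unfolding unitary_mat_def by auto
  have "1 = (mat_adjoint U * U) $$ (j,j)" using assms unfolding unitary_mat_def by simp
  also have "\<dots> = (\<Sum>t<n. mat_adjoint U $$ (j,t) * U $$ (t,j))" using U assms by (intro mult_entry) auto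
  also have "\<dots> = (\<Sum>t<n. cnj (U $$ (t,j)) * U $$ (t,j))" using U assms by (intro sum.cong) auto
  also have "\<dots> = 0" using z by simp
  finally show False by simp
qed



lemma cscalar_sum: "v \<in> carrier_vec n \<Longrightarrow> w \<in> carrier_vec n \<Longrightarrow>
  v \<bullet>c w = (\<Sum>i<n. v $ i * cnj (w $ i))"
  unfolding scalar_prod_def by (auto simp: atLeast0LessThan)

lemma cscalar_self: assumes "w \<in> carrier_vec n"
  shows "w \<bullet>c w = complex_of_real (\<Sum>i<n. (cmod (w $ i))^2)"
proof -
  have "w \<bullet>c w = (\<Sum>i<n. w $ i * cnj (w $ i))" using cscalar_sum[OF assms assms] .
  also have "\<dots> = (\<Sum>i<n. complex_of_real ((cmod (w $ i))^2))"
    by (intro sum.cong refl) (metis complex_norm_square of_real_power)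
  finally show ?thesis by simp
qed

lemma unitary_completion:
  fixes v :: "complex vec"
  assumes v: "v \<in> carrier_vec n" and v0: "v \<noteq> 0\<^sub>v n"
  shows "\<exists>W c. unitary_mat n W \<and> col W 0 = c \<cdot>\<^sub>v v"
proof -
  interpret cof_vec_space n "TYPE(complex)" .
  define b where "b = basis_completion v"
  from basis_completion[OF v v0, folded b_def] have b: "set b \<subseteq> carrier_vec n" "distinct b"
    "\<not> lin_dep (set b)" "length b = n" "hd b = v" by auto
  have n0: "n \<noteq> 0"
  proof
    assume "n = 0" then have "v = 0\<^sub>v n" using v by auto
    then show False using v0 by simp
  qed
  then obtain vs where bv: "b = v # vs" using b(4,5) by (cases b) auto
  define ws where "ws = gram_schmidt n b"
  from gram_schmidt_result[OF b(1) b(2) b(3) ws_def] b(4)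
  have ws: "corthogonal ws" "set ws \<subseteq> carrier_vec n" "length ws = n" by auto
  have hdws: "hd ws = v" unfolding ws_def bv by (rule gram_schmidt_hd[OF v])
  have ws0: "ws ! 0 = v" using hdws ws(3) n0 by (cases ws) auto
  have wsc: "ws ! j \<in> carrier_vec n" if "j < n" for j using ws that by auto
  define N where "N j = sqrt (\<Sum>i<n. (cmod (ws ! j $ i))^2)" for j
  have selfN: "ws ! j \<bullet>c ws ! j = complex_of_real ((N j)^2)" if "j < n" for j
    using cscalar_self[OF wsc[OF that]] unfolding N_def by (simp add: sum_nonneg)
  have Npos: "N j > 0" if "j < n" for j
  proof -
    have "ws ! j \<bullet>c ws ! j \<noteq> 0" using corthogonalD[OF ws(1)] that ws(3) by auto
    then have "N j \<noteq> 0" using selfN[OF that] by auto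
    moreover have "N j \<ge> 0" unfolding N_def by (simp add: sum_nonneg)
    ultimately show ?thesis by simp
  qed
  define W where "W = mat n n (\<lambda>(i,j). ws ! j $ i / complex_of_real (N j))"
  have W: "W \<in> carrier_mat n n" unfolding W_def by simp
  have aW: "mat_adjoint W \<in> carrier_mat n n" using W by simp
  have WW: "mat_adjoint W * W = 1\<^sub>m n"
  proof (rule eq_matI)
    fix j k assume "j < dim_row (1\<^sub>m n :: complex mat)" "k < dim_col (1\<^sub>m n :: complex mat)"
    then have j: "j < n" and k: "k < n" by auto
    have "(mat_adjoint W * W) $$ (j,k) = (\<Sum>t<n. mat_adjoint W $$ (j,t) * W $$ (t,k))"
      using aW W j k by (intro mult_entry) auto
    also have "\<dots> = (\<Sum>t<n. ws ! k $ t * cnj (ws ! j $ t)) / (complex_of_real (N j) * complex_of_real (N k))"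
      using W j k unfolding sum_divide_distrib by (intro sum.cong refl) (auto simp: W_def)
    also have "\<dots> = (ws ! k \<bullet>c ws ! j) / (complex_of_real (N j) * complex_of_real (N k))"
      using cscalar_sum[OF wsc[OF k] wsc[OF j]] by simp
    also have "\<dots> = 1\<^sub>m n $$ (j,k)"
    proof (cases "j = k")
      case True
      then show ?thesis using selfN[OF j] Npos[OF j] j by (simp add: power2_eq_square)
    next
      case False
      then have "ws ! k \<bullet>c ws ! j = 0" using corthogonalD[OF ws(1)] j k ws(3) by auto
      then show ?thesis using False j k by simp
    qed
    finally show "(mat_adjoint W * W) $$ (j,k) = 1\<^sub>m n $$ (j,k)" .
  qed (use W in auto)
  have WW2: "W * mat_adjoint W = 1\<^sub>m n" by (rule mat_mult_left_right_inverse[OF aW W WW])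
  have "col W 0 = (1 / complex_of_real (N 0)) \<cdot>\<^sub>v v"
    using n0 v ws0 by (intro eq_vecI) (auto simp: W_def)
  then show ?thesis using WW WW2 W unfolding unitary_mat_def by blast
qed



lemma sq_mult_carrier[simp]: "A \<in> carrier_mat n n \<Longrightarrow> B \<in> carrier_mat n n \<Longrightarrow> A * B \<in> carrier_mat n n"
  by auto

lemma sq_assoc: "A \<in> carrier_mat n n \<Longrightarrow> B \<in> carrier_mat n n \<Longrightarrow> C \<in> carrier_mat n n \<Longrightarrow>
  A * B * C = A * (B * C)"
  by (rule assoc_mult_mat)

lemma unitary_carrier: "unitary_mat n U \<Longrightarrow> U \<in> carrier_mat n n"
  "unitary_mat n U \<Longrightarrow> mat_adjoint U \<in> carrier_mat n n"
  unfolding unitary_mat_def by auto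

lemma unitary_cancel: assumes "unitary_mat n U" "(X :: complex mat) \<in> carrier_mat n k"
  shows "U * (mat_adjoint U * X) = X" "mat_adjoint U * (U * X) = X"
    "U * mat_adjoint U = 1\<^sub>m n" "mat_adjoint U * U = 1\<^sub>m n"
proof -
  have U: "U \<in> carrier_mat n n" "mat_adjoint U \<in> carrier_mat n n" using assms unitary_carrier by auto
  show "U * mat_adjoint U = 1\<^sub>m n" "mat_adjoint U * U = 1\<^sub>m n" using assms unfolding unitary_mat_def by auto
  then show "U * (mat_adjoint U * X) = X" "mat_adjoint U * (U * X) = X"
    using assoc_mult_mat[OF U(1) U(2) assms(2)] assoc_mult_mat[OF U(2) U(1) assms(2)] assms(2) by auto
qed

lemma spectral:
  "hermitian_mat n (A::complex mat) \<Longrightarrow>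
   \<exists>U D. unitary_mat n U \<and> real_diagonal_mat n D \<and> A = U * D * mat_adjoint U"
proof (induction n arbitrary: A)
  case 0
  then have A: "A \<in> carrier_mat 0 0" unfolding hermitian_mat_def by auto
  have "unitary_mat 0 (1\<^sub>m 0)" unfolding unitary_mat_def by auto
  moreover have "real_diagonal_mat 0 (0\<^sub>m 0 0)" unfolding real_diagonal_mat_def diagonal_mat_def by auto
  moreover have "A = 1\<^sub>m 0 * 0\<^sub>m 0 0 * mat_adjoint (1\<^sub>m 0)" using A by (intro eq_matI) auto
  ultimately show ?case by blast
next
  case (Suc m)
  define n where "n = Suc m"
  have A: "A \<in> carrier_mat n n" and hA: "mat_adjoint A = A" using Suc.prems unfolding hermitian_mat_def n_def by auto
  obtain as where as: "char_poly A = (\<Prod>a\<leftarrow>as. [:- a, 1:])" "length as = n"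
    using char_poly_factorized[OF A] by blast
  then obtain e as' where eas: "as = e # as'" unfolding n_def by (cases as) auto
  have "poly (char_poly A) e = 0" unfolding as(1) eas by simp
  then have "eigenvalue A e" using eigenvalue_root_char_poly[OF A] by simp
  then obtain v where v: "v \<in> carrier_vec n" "v \<noteq> 0\<^sub>v n" "A *\<^sub>v v = e \<cdot>\<^sub>v v"
    unfolding eigenvalue_def eigenvector_def using A by auto
  obtain W c where W: "unitary_mat n W" and cW: "col W 0 = c \<cdot>\<^sub>v v"
    using unitary_completion[OF v(1) v(2)] by blast
  have Wc: "W \<in> carrier_mat n n" "mat_adjoint W \<in> carrier_mat n n" using W unitary_carrier by auto
  have n0: "0 < n" unfolding n_def by simp
  have colAW: "col (A * W) 0 = e \<cdot>\<^sub>v col W 0"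
  proof -
    have "col (A * W) 0 = A *\<^sub>v col W 0" using A Wc n0 by (auto intro!: eq_vecI)
    also have "\<dots> = c \<cdot>\<^sub>v (A *\<^sub>v v)" unfolding cW by (rule mult_mat_vec[OF A v(1)])
    also have "\<dots> = e \<cdot>\<^sub>v col W 0" unfolding cW v(3) using v(1) by (intro eq_vecI) auto
    finally show ?thesis .
  qed
  have AW0: "(A * W) $$ (k,0) = e * W $$ (k,0)" if "k < n" for k
  proof -
    have "(A * W) $$ (k,0) = col (A * W) 0 $ k" using that A Wc n0 by simp
    also have "\<dots> = e * W $$ (k,0)" unfolding colAW using that Wc n0 by simp
    finally show ?thesis .
  qed
  define A' where "A' = mat_adjoint W * (A * W)"
  have A': "A' \<in> carrier_mat n n" unfolding A'_def using A Wc by simp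
  have A'0: "A' $$ (i,0) = (if i = 0 then e else 0)" if "i < n" for i
  proof -
    have "A' $$ (i,0) = (\<Sum>t<n. mat_adjoint W $$ (i,t) * (A * W) $$ (t,0))"
      unfolding A'_def using Wc A that n0 by (intro mult_entry) auto
    also have "\<dots> = e * (\<Sum>t<n. mat_adjoint W $$ (i,t) * W $$ (t,0))"
      by (simp add: AW0 sum_distrib_left mult.left_commute)
    also have "\<dots> = e * (mat_adjoint W * W) $$ (i,0)"
      using Wc that n0 by (subst mult_entry[of _ n n _ n]) auto
    also have "\<dots> = (if i = 0 then e else 0)" using unitary_cancel(4)[OF W Wc(1)] that n0 by simp
    finally show ?thesis .
  qed
  have hA': "mat_adjoint A' = A'"
    unfolding A'_def using A Wc hA
    by (simp add: adj_mult[of _ n n _ n] sq_assoc[of _ n])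
  have A'sym: "A' $$ (i,j) = cnj (A' $$ (j,i))" if "i < n" "j < n" for i j
    using arg_cong[OF hA', of "\<lambda>M. M $$ (i,j)"] A' that by simp
  have eR: "cnj e = e" using A'sym[of 0 0] A'0[of 0] n0 by simp
  have A'0': "A' $$ (0,j) = (if j = 0 then e else 0)" if "j < n" for j
    using A'sym[of 0 j] A'0[of j] that n0 eR by auto
  define A3 where "A3 = mat m m (\<lambda>(i,j). A' $$ (Suc i, Suc j))"
  have "hermitian_mat m A3" unfolding hermitian_mat_def
  proof
    show "A3 \<in> carrier_mat m m" unfolding A3_def by simp
    show "mat_adjoint A3 = A3"
    proof (rule eq_matI)
      fix i j assume "i < dim_row A3" "j < dim_col A3"
      then have i: "i < m" and j: "j < m" unfolding A3_def by auto
      have "mat_adjoint A3 $$ (i,j) = cnj (A' $$ (Suc j, Suc i))" using i j unfolding A3_def by simp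
      also have "\<dots> = A' $$ (Suc i, Suc j)" using A'sym[of "Suc i" "Suc j"] i j unfolding n_def by simp
      finally show "mat_adjoint A3 $$ (i,j) = A3 $$ (i,j)" using i j unfolding A3_def by simp
    qed (auto simp: A3_def)
  qed
  from Suc.IH[OF this] obtain U3 D3 where U3: "unitary_mat m U3" and D3: "real_diagonal_mat m D3"
    and A3eq: "A3 = U3 * D3 * mat_adjoint U3" by blast
  have U3c: "U3 \<in> carrier_mat m m" "mat_adjoint U3 \<in> carrier_mat m m" using U3 unitary_carrier by auto
  have D3c: "D3 \<in> carrier_mat m m" using D3 unfolding real_diagonal_mat_def by auto
  define E1 where "E1 = mat 1 1 (\<lambda>_. e)"
  define V where "V = four_block_mat (1\<^sub>m 1) (0\<^sub>m 1 m) (0\<^sub>m m 1) U3"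
  define Dd where "Dd = four_block_mat E1 (0\<^sub>m 1 m) (0\<^sub>m m 1) D3"
  have E1c: "E1 \<in> carrier_mat 1 1" unfolding E1_def by simp
  have aV: "mat_adjoint V = four_block_mat (1\<^sub>m 1) (0\<^sub>m 1 m) (0\<^sub>m m 1) (mat_adjoint U3)"
    unfolding V_def using U3c by (intro eq_matI) auto
  have Vc: "V \<in> carrier_mat n n" unfolding V_def n_def using U3c by auto
  have Ddc: "Dd \<in> carrier_mat n n" unfolding Dd_def n_def using D3c E1c by auto
  have "V * mat_adjoint V = four_block_mat (1\<^sub>m 1) (0\<^sub>m 1 m) (0\<^sub>m m 1) (U3 * mat_adjoint U3)"
    unfolding aV unfolding V_def using U3c
    by (subst mult_four_block_mat[OF one_carrier_mat zero_carrier_mat zero_carrier_mat U3c(1) one_carrier_mat zero_carrier_mat zero_carrier_mat U3c(2)]) auto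
  also have "\<dots> = 1\<^sub>m n" using unitary_cancel(3)[OF U3 U3c(1)] n_def by simp
  finally have VV1: "V * mat_adjoint V = 1\<^sub>m n" .
  have "mat_adjoint V * V = four_block_mat (1\<^sub>m 1) (0\<^sub>m 1 m) (0\<^sub>m m 1) (mat_adjoint U3 * U3)"
    unfolding aV unfolding V_def using U3c
    by (subst mult_four_block_mat[OF one_carrier_mat zero_carrier_mat zero_carrier_mat U3c(2) one_carrier_mat zero_carrier_mat zero_carrier_mat U3c(1)]) auto
  also have "\<dots> = 1\<^sub>m n" using unitary_cancel(4)[OF U3 U3c(1)] n_def by simp
  finally have VV2: "mat_adjoint V * V = 1\<^sub>m n" .
  have Vu: "unitary_mat n V" using VV1 VV2 Vc unfolding unitary_mat_def by auto
  have VD: "V * Dd = four_block_mat E1 (0\<^sub>m 1 m) (0\<^sub>m m 1) (U3 * D3)"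
    unfolding V_def Dd_def using U3c D3c E1c
    by (subst mult_four_block_mat[OF one_carrier_mat zero_carrier_mat zero_carrier_mat U3c(1) E1c zero_carrier_mat zero_carrier_mat D3c]) auto
  have "V * Dd * mat_adjoint V = four_block_mat E1 (0\<^sub>m 1 m) (0\<^sub>m m 1) (U3 * D3 * mat_adjoint U3)"
    unfolding aV VD using U3c D3c E1c
    by (subst mult_four_block_mat[OF E1c zero_carrier_mat zero_carrier_mat mult_carrier_mat[OF U3c(1) D3c] one_carrier_mat zero_carrier_mat zero_carrier_mat U3c(2)]) auto
  also have "\<dots> = A'"
  proof (rule eq_matI)
    fix i j assume ij: "i < dim_row A'" "j < dim_col A'"
    then have i: "i < n" and j: "j < n" using A' by auto
    show "four_block_mat E1 (0\<^sub>m 1 m) (0\<^sub>m m 1) (U3 * D3 * mat_adjoint U3) $$ (i,j) = A' $$ (i,j)"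
    proof (cases "i = 0")
      case True
      then show ?thesis using A'0'[OF j] j E1c U3c D3c unfolding n_def by (auto simp: E1_def)
    next
      case False
      note i0 = this
      show ?thesis
      proof (cases "j = 0")
        case True
        then show ?thesis using A'0[OF i] i i0 E1c U3c D3c unfolding n_def by (auto simp: E1_def)
      next
        case False
        then show ?thesis using i j i0 E1c U3c D3c unfolding n_def A3eq[symmetric]
          by (auto simp: A3_def)
      qed
    qed
  qed (use A' U3c D3c E1c in \<open>auto simp: n_def\<close>)
  finally have A'eq: "A' = V * Dd * mat_adjoint V" by simp
  have Ddr: "real_diagonal_mat n Dd"
    unfolding real_diagonal_mat_def diagonal_mat_def
  proof (intro conjI allI impI)
    show "Dd \<in> carrier_mat n n" by (rule Ddc)
  next
    fix i j assume "i < dim_row Dd" "j < dim_col Dd" "i \<noteq> j"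
    then show "Dd $$ (i,j) = 0" using D3 E1c unfolding Dd_def real_diagonal_mat_def diagonal_mat_def
      by auto
  next
    fix i assume "i < n"
    then show "Dd $$ (i,i) \<in> \<real>" using D3 E1c eR unfolding Dd_def real_diagonal_mat_def n_def
      by (auto simp: E1_def Reals_cnj_iff)
  qed
  define U where "U = W * V"
  have Uu: "unitary_mat n U" unfolding U_def by (rule unitary_mult[OF W Vu])
  have "A = W * A' * mat_adjoint W"
    unfolding A'_def using A Wc unitary_cancel[OF W] by (simp add: sq_assoc[of _ n])
  also have "\<dots> = U * Dd * mat_adjoint U"
    unfolding A'eq U_def using Wc Vc Ddc by (simp add: sq_assoc[of _ n] adj_mult[of _ n n _ n])
  finally show ?case using Uu Ddr unfolding n_def by blast
qed



lemma prod_list_remove1': "x \<in> set ys \<Longrightarrow>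
  prod_list (map f ys) = (f x :: 'b :: comm_monoid_mult) * prod_list (map f (remove1 x ys))"
  by (induction ys) (auto simp: mult.left_commute)

lemma lin_factors_mset:
  fixes xs ys :: "real list"
  assumes "(\<Prod>x\<leftarrow>xs. [:- complex_of_real x, 1:]) = (\<Prod>y\<leftarrow>ys. [:- complex_of_real y, 1:])"
  shows "mset xs = mset ys"
  using assms
proof (induction xs arbitrary: ys)
  case Nil
  have "degree (\<Prod>y\<leftarrow>ys. [:- complex_of_real y, 1:]) = length ys"
    by (rule degree_linear_factors)
  then show ?case using Nil.prems[symmetric] by simp
next
  case (Cons x xs)
  have "poly (\<Prod>y\<leftarrow>ys. [:- complex_of_real y, 1:]) (complex_of_real x) = 0"
    using Cons.prems[symmetric] by (simp add: poly_prod_list)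
  then have "(\<Prod>y\<leftarrow>ys. poly [:- complex_of_real y, 1:] (complex_of_real x)) = 0"
    by (simp add: poly_prod_list o_def)
  then obtain y where y: "y \<in> set ys" "complex_of_real x - complex_of_real y = 0"
    unfolding prod_list_zero_iff by auto
  then have xy: "x \<in> set ys" by simp
  have "[:- complex_of_real x, 1:] * (\<Prod>y\<leftarrow>xs. [:- complex_of_real y, 1:]) =
        [:- complex_of_real x, 1:] * (\<Prod>y\<leftarrow>remove1 x ys. [:- complex_of_real y, 1:])"
    using Cons.prems prod_list_remove1'[OF xy, of "\<lambda>y. [:- complex_of_real y, 1:]"] by simp
  then have "(\<Prod>y\<leftarrow>xs. [:- complex_of_real y, 1:]) = (\<Prod>y\<leftarrow>remove1 x ys. [:- complex_of_real y, 1:])"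
    by (subst (asm) mult_left_cancel) auto
  from Cons.IH[OF this] have "mset xs = mset (remove1 x ys)" .
  then show ?case using xy by simp
qed

lemma lin_factors_sorted_unique:
  fixes xs ys :: "real list"
  assumes "(\<Prod>x\<leftarrow>xs. [:- complex_of_real x, 1:]) = (\<Prod>y\<leftarrow>ys. [:- complex_of_real y, 1:])"
    and "sorted xs" "sorted ys"
  shows "xs = ys"
proof -
  have "mset xs = mset ys" by (rule lin_factors_mset[OF assms(1)])
  then have "sort ys = xs" "sort ys = ys" using assms(2,3) by (auto intro!: properties_for_sort)
  then show ?thesis by simp
qed

lemma char_poly_UDU:
  assumes U: "unitary_mat n U" and D: "D \<in> carrier_mat n n" "diagonal_mat D"
  shows "char_poly (U * D * mat_adjoint U) = (\<Prod>a\<leftarrow>map (\<lambda>i. D $$ (i,i)) [0..<n]. [:- a, 1:])"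
proof -
  have Uc: "U \<in> carrier_mat n n" "mat_adjoint U \<in> carrier_mat n n" using U unitary_carrier by auto
  have "similar_mat_wit (U * D * mat_adjoint U) D U (mat_adjoint U)"
    unfolding similar_mat_wit_def Let_def using Uc D unitary_cancel(3,4)[OF U Uc(1)] by auto
  then have "similar_mat (U * D * mat_adjoint U) D" unfolding similar_mat_def by blast
  then have "char_poly (U * D * mat_adjoint U) = char_poly D" by (rule char_poly_similar)
  also have "\<dots> = (\<Prod>a\<leftarrow>diag_mat D. [:- a, 1:])"
    by (rule char_poly_upper_triangular[OF D(1)]) (use D in \<open>auto simp: upper_triangular_def diagonal_mat_def\<close>)
  also have "diag_mat D = map (\<lambda>i. D $$ (i,i)) [0..<n]" using D unfolding diag_mat_def by auto
  finally show ?thesis .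
qed

lemma eigenvalue_UDU:
  assumes U: "unitary_mat n U" and D: "D \<in> carrier_mat n n" "diagonal_mat D"
  shows "eigenvalue (U * D * mat_adjoint U) e \<longleftrightarrow> (\<exists>i<n. e = D $$ (i,i))"
proof -
  have Uc: "U \<in> carrier_mat n n" "mat_adjoint U \<in> carrier_mat n n" using U unitary_carrier by auto
  have M: "U * D * mat_adjoint U \<in> carrier_mat n n" using Uc D by simp
  have "eigenvalue (U * D * mat_adjoint U) e \<longleftrightarrow> poly (char_poly (U * D * mat_adjoint U)) e = 0"
    by (rule eigenvalue_root_char_poly[OF M])
  also have "\<dots> \<longleftrightarrow> (\<exists>i<n. e = D $$ (i,i))"
    unfolding char_poly_UDU[OF assms] poly_prod_list by (auto simp: prod_list_zero_iff o_def)
  finally show ?thesis .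
qed

lemma eigenvalues_UDU:
  assumes U: "unitary_mat n U" and D: "D \<in> carrier_mat n n" "diagonal_mat D"
  shows "{e. eigenvalue (U * D * mat_adjoint U) e} = (\<lambda>i. D $$ (i,i)) ` {..<n}"
  using eigenvalue_UDU[OF assms] by auto

lemma eig_list_UDU:
  assumes U: "unitary_mat n U" and D: "real_diagonal_mat n D"
  shows "eig_list n (U * D * mat_adjoint U) = sort (map (\<lambda>i. Re (D $$ (i,i))) [0..<n])"
proof -
  let ?es = "sort (map (\<lambda>i. Re (D $$ (i,i))) [0..<n])"
  have Dc: "D \<in> carrier_mat n n" "diagonal_mat D" using D unfolding real_diagonal_mat_def by auto
  have Dr: "complex_of_real (Re (D $$ (i,i))) = D $$ (i,i)" if "i < n" for i
    using D that unfolding real_diagonal_mat_def by (auto simp: Reals_def)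
  have "(\<Prod>e\<leftarrow>?es. [:- complex_of_real e, 1:]) = (\<Prod>e\<leftarrow>map (\<lambda>i. Re (D $$ (i,i))) [0..<n]. [:- complex_of_real e, 1:])"
    by (metis (no_types, lifting) mset_map mset_sort prod_mset_prod_list)
  also have "\<dots> = (\<Prod>a\<leftarrow>map (\<lambda>i. D $$ (i,i)) [0..<n]. [:- a, 1:])"
    using Dr by (simp add: o_def, intro arg_cong[where f=prod_list] map_cong) auto
  also have "\<dots> = char_poly (U * D * mat_adjoint U)" using char_poly_UDU[OF U Dc] by simp
  finally have cp: "char_poly (U * D * mat_adjoint U) = (\<Prod>e\<leftarrow>?es. [:- complex_of_real e, 1:])" by simp
  have P: "length ?es = n \<and> sorted ?es \<and> char_poly (U * D * mat_adjoint U) = prod_list (map (\<lambda>e. [:- complex_of_real e, 1:]) ?es)"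
    using cp by simp
  show ?thesis unfolding eig_list_def
  proof (rule the_equality)
    show "length ?es = n \<and> sorted ?es \<and> char_poly (U * D * mat_adjoint U) = prod_list (map (\<lambda>e. [:- complex_of_real e, 1:]) ?es)"
      by (rule P)
  next
    fix es assume "length es = n \<and> sorted es \<and> char_poly (U * D * mat_adjoint U) = prod_list (map (\<lambda>e. [:- complex_of_real e, 1:]) es)"
    then show "es = ?es" using cp lin_factors_sorted_unique[of es ?es] by auto
  qed
qed



lemma comb_bound:
  fixes f :: "nat \<Rightarrow> real" and J :: "nat \<Rightarrow> nat set"
  assumes J: "\<forall>j\<in>{1..r}. J j \<subseteq> {1..d} \<and> card (J j) = ls j"
    and disj: "\<forall>j\<in>{1..r}. \<forall>j'\<in>{1..r}. j \<noteq> j' \<longrightarrow> J j \<inter> J j' = {}"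
    and const: "\<forall>j\<in>{1..r}. \<forall>i\<in>J j. \<forall>i'\<in>J j. f i = f i'"
  shows "card (f ` {1..d}) + (\<Sum>j=1..r. ls j) \<le> d + r"
proof -
  define U where "U = (\<Union>j\<in>{1..r}. J j)"
  have fin: "finite (J j)" if "j \<in> {1..r}" for j using J that finite_subset[of "J j" "{1..d}"] by auto
  have "card U = (\<Sum>j=1..r. card (J j))" unfolding U_def
    by (rule card_UN_disjoint) (use fin disj in auto)
  also have "\<dots> = (\<Sum>j=1..r. ls j)" using J by (intro sum.cong) auto
  finally have cU: "card U = (\<Sum>j=1..r. ls j)" .
  have Usub: "U \<subseteq> {1..d}" unfolding U_def using J by auto
  have cUd: "card U \<le> d" using card_mono[OF _ Usub] by simp
  have cR: "card ({1..d} - U) = d - card U" using card_Diff_subset[OF finite_subset[OF Usub] Usub] by simp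
  have sub: "f ` {1..d} \<subseteq> f ` ({1..d} - U) \<union> (\<Union>j\<in>{1..r}. f ` J j)" unfolding U_def by auto
  have "card (f ` {1..d}) \<le> card (f ` ({1..d} - U) \<union> (\<Union>j\<in>{1..r}. f ` J j))"
    by (rule card_mono[OF _ sub]) (use fin in auto)
  also have "\<dots> \<le> card (f ` ({1..d} - U)) + card (\<Union>j\<in>{1..r}. f ` J j)" by (rule card_Un_le)
  also have "card (f ` ({1..d} - U)) \<le> card ({1..d} - U)" by (rule card_image_le) simp
  also have "card (\<Union>j\<in>{1..r}. f ` J j) \<le> (\<Sum>j=1..r. card (f ` J j))" by (rule card_UN_le) simp
  also have "(\<Sum>j=1..r. card (f ` J j)) \<le> (\<Sum>j=1..r. (1::nat))"
  proof (rule sum_mono)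
    fix j assume j: "j \<in> {1..r}"
    have "\<forall>a\<in>f ` J j. \<forall>b\<in>f ` J j. a = b" using const j by blast
    then have "card (f ` J j) \<le> Suc 0" using fin[OF j] card_le_Suc0_iff_eq[of "f ` J j"] by blast
    then show "card (f ` J j) \<le> 1" by simp
  qed
  finally show ?thesis using cR cU cUd by simp
qed

lemma Hset_bound:
  assumes "B \<in> Hset d r ls" and U: "unitary_mat d U" and D: "real_diagonal_mat d D"
    and B: "B = U * D * mat_adjoint U"
  shows "card {e. eigenvalue B e} + (\<Sum>j=1..r. ls j) \<le> d + r"
proof -
  obtain J :: "nat \<Rightarrow> nat set" where J: "\<forall>j\<in>{1..r}. J j \<subseteq> {1..d} \<and> card (J j) = ls j"
    and disj: "\<forall>j\<in>{1..r}. \<forall>j'\<in>{1..r}. j \<noteq> j' \<longrightarrow> J j \<inter> J j' = {}"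
    and const: "\<forall>j\<in>{1..r}. \<forall>i\<in>J j. \<forall>i'\<in>J j. E d B i = E d B i'"
    using assms(1) unfolding Hset_def by auto
  have Dc: "D \<in> carrier_mat d d" "diagonal_mat D" using D unfolding real_diagonal_mat_def by auto
  have Dr: "complex_of_real (Re (D $$ (i,i))) = D $$ (i,i)" if "i < d" for i
    using D that unfolding real_diagonal_mat_def by (auto simp: Reals_def)
  define es where "es = sort (map (\<lambda>i. Re (D $$ (i,i))) [0..<d])"
  have es: "eig_list d B = es" unfolding es_def B by (rule eig_list_UDU[OF U D])
  have les: "length es = d" unfolding es_def by simp
  have "(\<lambda>i. E d B i) ` {1..d} = set es"
  proof
    show "(\<lambda>i. E d B i) ` {1..d} \<subseteq> set es" unfolding E_def es using les by auto
    show "set es \<subseteq> (\<lambda>i. E d B i) ` {1..d}"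
    proof
      fix x assume "x \<in> set es"
      then obtain k where k: "k < d" "x = es ! k" using les by (auto simp: in_set_conv_nth)
      then have "x = E d B (Suc k)" unfolding E_def es by simp
      then show "x \<in> (\<lambda>i. E d B i) ` {1..d}" using k by (intro image_eqI[of _ _ "Suc k"]) auto
    qed
  qed
  also have "set es = (\<lambda>i. Re (D $$ (i,i))) ` {..<d}" unfolding es_def by auto
  finally have Eim: "(\<lambda>i. E d B i) ` {1..d} = (\<lambda>i. Re (D $$ (i,i))) ` {..<d}" .
  have "{e. eigenvalue B e} = (\<lambda>i. D $$ (i,i)) ` {..<d}" unfolding B by (rule eigenvalues_UDU[OF U Dc])
  also have "\<dots> = complex_of_real ` ((\<lambda>i. Re (D $$ (i,i))) ` {..<d})" using Dr by (auto simp: image_iff)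
  finally have "card {e. eigenvalue B e} = card ((\<lambda>i. Re (D $$ (i,i))) ` {..<d})"
    by (simp add: card_image inj_on_def)
  also have "\<dots> = card ((\<lambda>i. E d B i) ` {1..d})" using Eim by simp
  finally have "card {e. eigenvalue B e} = card ((\<lambda>i. E d B i) ` {1..d})" .
  then show ?thesis using comb_bound[OF J disj const] by linarith
qed



definition mconv :: "nat \<Rightarrow> (nat \<Rightarrow> complex mat) \<Rightarrow> complex mat \<Rightarrow> bool" where
  "mconv n X Y \<longleftrightarrow> (\<forall>k. X k \<in> carrier_mat n n) \<and> Y \<in> carrier_mat n n \<and>
     (\<forall>i<n. \<forall>j<n. (\<lambda>k. X k $$ (i,j)) \<longlonglongrightarrow> Y $$ (i,j))"

lemma mconv_mult: assumes "mconv n X Y" "mconv n X' Y'"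
  shows "mconv n (\<lambda>k. X k * X' k) (Y * Y')"
  unfolding mconv_def
proof (intro conjI allI impI)
  show "X k * X' k \<in> carrier_mat n n" for k using assms unfolding mconv_def by auto
  show "Y * Y' \<in> carrier_mat n n" using assms unfolding mconv_def by auto
  fix i j assume i: "i < n" and j: "j < n"
  have e1: "(X k * X' k) $$ (i,j) = (\<Sum>t<n. X k $$ (i,t) * X' k $$ (t,j))" for k
    using assms i j unfolding mconv_def by (intro mult_entry) auto
  have e2: "(Y * Y') $$ (i,j) = (\<Sum>t<n. Y $$ (i,t) * Y' $$ (t,j))"
    using assms i j unfolding mconv_def by (intro mult_entry) auto
  show "(\<lambda>k. (X k * X' k) $$ (i,j)) \<longlonglongrightarrow> (Y * Y') $$ (i,j)"
    unfolding e1 e2 using assms i j unfolding mconv_def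
    by (intro tendsto_sum tendsto_mult) auto
qed

lemma mconv_adj: assumes "mconv n X Y"
  shows "mconv n (\<lambda>k. mat_adjoint (X k)) (mat_adjoint Y)"
  unfolding mconv_def
proof (intro conjI allI impI)
  show "mat_adjoint (X k) \<in> carrier_mat n n" for k using assms unfolding mconv_def by auto
  show "mat_adjoint Y \<in> carrier_mat n n" using assms unfolding mconv_def by auto
  fix i j assume i: "i < n" and j: "j < n"
  have e: "(\<lambda>k. mat_adjoint (X k) $$ (i,j)) = (\<lambda>k. cnj (X k $$ (j,i)))"
  proof (rule ext)
    fix k have "X k \<in> carrier_mat n n" using assms unfolding mconv_def by auto
    then show "mat_adjoint (X k) $$ (i,j) = cnj (X k $$ (j,i))" using i j by simp
  qed
  have "(\<lambda>k. cnj (X k $$ (j,i))) \<longlonglongrightarrow> cnj (Y $$ (j,i))"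
    using assms i j unfolding mconv_def by (intro tendsto_cnj) auto
  then show "(\<lambda>k. mat_adjoint (X k) $$ (i,j)) \<longlonglongrightarrow> mat_adjoint Y $$ (i,j)"
    unfolding e using assms i j unfolding mconv_def by auto
qed

lemma mconv_const: "Y \<in> carrier_mat n n \<Longrightarrow> mconv n (\<lambda>k. Y) Y"
  unfolding mconv_def by auto

lemma mconv_subseq: assumes "mconv n X Y" "strict_mono \<sigma>"
  shows "mconv n (\<lambda>k. X (\<sigma> k)) Y"
  unfolding mconv_def
proof (intro conjI allI impI)
  show "X (\<sigma> k) \<in> carrier_mat n n" for k using assms unfolding mconv_def by auto
  show "Y \<in> carrier_mat n n" using assms unfolding mconv_def by auto
  fix i j assume i: "i < n" and j: "j < n"
  have "(\<lambda>k. X k $$ (i,j)) \<longlonglongrightarrow> Y $$ (i,j)" using assms i j unfolding mconv_def by auto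
  from LIMSEQ_subseq_LIMSEQ[OF this assms(2)]
  show "(\<lambda>k. X (\<sigma> k) $$ (i,j)) \<longlonglongrightarrow> Y $$ (i,j)" by (simp add: o_def)
qed

lemma mconv_unique: assumes "mconv n X Y" "mconv n X Y'"
  shows "Y = Y'"
proof (rule eq_matI)
  fix i j assume "i < dim_row Y'" "j < dim_col Y'"
  then have "i < n" "j < n" using assms unfolding mconv_def by auto
  then have "(\<lambda>k. X k $$ (i,j)) \<longlonglongrightarrow> Y $$ (i,j)" "(\<lambda>k. X k $$ (i,j)) \<longlonglongrightarrow> Y' $$ (i,j)"
    using assms unfolding mconv_def by auto
  then show "Y $$ (i,j) = Y' $$ (i,j)" by (rule LIMSEQ_unique)
qed (use assms in \<open>auto simp: mconv_def\<close>)

lemma bounded_subseq: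
  fixes x :: "nat \<Rightarrow> 'i \<Rightarrow> complex"
  assumes "finite S" "\<forall>k. \<forall>s\<in>S. cmod (x k s) \<le> M"
  shows "\<exists>\<sigma> L. strict_mono \<sigma> \<and> (\<forall>s\<in>S. (\<lambda>k. x (\<sigma> k) s) \<longlonglongrightarrow> L s)"
  using assms
proof (induction S rule: finite_induct)
  case empty
  show ?case by (rule exI[of _ id]) (auto simp: strict_mono_def)
next
  case (insert a S)
  then obtain \<sigma> L where \<sigma>: "strict_mono \<sigma>" and L: "\<forall>s\<in>S. (\<lambda>k. x (\<sigma> k) s) \<longlonglongrightarrow> L s" by auto
  have "seq_compact (cball (0::complex) M)" by (rule compact_imp_seq_compact) simp
  moreover have "\<forall>k. x (\<sigma> k) a \<in> cball 0 M" using insert.prems by auto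
  ultimately obtain c \<tau> where \<tau>: "strict_mono \<tau>" and c: "((\<lambda>k. x (\<sigma> k) a) \<circ> \<tau>) \<longlonglongrightarrow> c"
    by (rule seq_compactE)
  show ?case
  proof (intro exI conjI)
    show "strict_mono (\<sigma> \<circ> \<tau>)" by (rule strict_mono_o[OF \<sigma> \<tau>])
    show "\<forall>s\<in>insert a S. (\<lambda>k. x ((\<sigma> \<circ> \<tau>) k) s) \<longlonglongrightarrow> (L(a := c)) s"
    proof
      fix s assume s: "s \<in> insert a S"
      show "(\<lambda>k. x ((\<sigma> \<circ> \<tau>) k) s) \<longlonglongrightarrow> (L(a := c)) s"
      proof (cases "s = a")
        case True
        then show ?thesis using c by (simp add: o_def)
      next
        case False
        then have "s \<in> S" using s by simp
        then have "((\<lambda>k. x (\<sigma> k) s) \<circ> \<tau>) \<longlonglongrightarrow> L s" using L LIMSEQ_subseq_LIMSEQ[OF _ \<tau>] by blast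
        then show ?thesis using False by (simp add: o_def)
      qed
    qed
  qed
qed

lemma unitary_subseq:
  fixes Q :: "nat \<Rightarrow> complex mat"
  assumes "\<forall>k. unitary_mat n (Q k)"
  shows "\<exists>\<sigma> Q0. strict_mono \<sigma> \<and> mconv n (\<lambda>k. Q (\<sigma> k)) Q0 \<and> unitary_mat n Q0"
proof -
  let ?S = "{..<n} \<times> {..<n}"
  have "\<forall>k. \<forall>s\<in>?S. cmod ((\<lambda>k s. Q k $$ s) k s) \<le> 1"
    using assms by (auto intro!: unitary_entry_le[of n])
  from bounded_subseq[of ?S "\<lambda>k s. Q k $$ s" 1] this obtain \<sigma> L where \<sigma>: "strict_mono \<sigma>"
    and L: "\<forall>s\<in>?S. (\<lambda>k. Q (\<sigma> k) $$ s) \<longlonglongrightarrow> L s" by auto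
  define Q0 where "Q0 = mat n n L"
  have mc: "mconv n (\<lambda>k. Q (\<sigma> k)) Q0"
    unfolding mconv_def Q0_def using L assms unitary_carrier by auto
  have "mconv n (\<lambda>k. Q (\<sigma> k) * mat_adjoint (Q (\<sigma> k))) (Q0 * mat_adjoint Q0)"
    by (rule mconv_mult[OF mc mconv_adj[OF mc]])
  moreover have "mconv n (\<lambda>k. Q (\<sigma> k) * mat_adjoint (Q (\<sigma> k))) (1\<^sub>m n)"
    using assms unfolding unitary_mat_def by (simp add: mconv_const)
  ultimately have 1: "Q0 * mat_adjoint Q0 = 1\<^sub>m n" by (rule mconv_unique)
  have "mconv n (\<lambda>k. mat_adjoint (Q (\<sigma> k)) * Q (\<sigma> k)) (mat_adjoint Q0 * Q0)"
    by (rule mconv_mult[OF mconv_adj[OF mc] mc])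
  moreover have "mconv n (\<lambda>k. mat_adjoint (Q (\<sigma> k)) * Q (\<sigma> k)) (1\<^sub>m n)"
    using assms unfolding unitary_mat_def by (simp add: mconv_const)
  ultimately have 2: "mat_adjoint Q0 * Q0 = 1\<^sub>m n" by (rule mconv_unique)
  have "unitary_mat n Q0" using 1 2 unfolding unitary_mat_def Q0_def by auto
  then show ?thesis using \<sigma> mc by blast
qed



lemma conv_of_close:
  fixes a :: complex
  assumes "\<forall>k. cmod (a - b k) < 1 / real (Suc k)"
  shows "b \<longlonglongrightarrow> a"
proof (rule LIMSEQ_I)
  fix r :: real assume "0 < r"
  then obtain N where N: "inverse (real (Suc N)) < r" using reals_Archimedean by blast
  have "cmod (b n - a) < r" if "n \<ge> N" for n
  proof -
    have "cmod (b n - a) = cmod (a - b n)" by (rule norm_minus_commute)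
    also have "\<dots> < 1 / real (Suc n)" using assms by blast
    also have "\<dots> \<le> inverse (real (Suc N))" using that by (simp add: divide_simps)
    finally show ?thesis using N by simp
  qed
  then show "\<exists>no. \<forall>n\<ge>no. cmod (b n - a) < r" by blast
qed

lemma ev_all1: fixes d :: nat assumes "\<forall>i<d. eventually (\<lambda>k. P k i) F" shows "eventually (\<lambda>k. \<forall>i<d. P k i) F"
proof -
  have "eventually (\<lambda>k. \<forall>i\<in>{..<d}. P k i) F" by (rule eventually_ball_finite) (use assms in auto)
  then show ?thesis by (rule eventually_mono) auto
qed

lemma ev_all2: fixes d :: nat shows "(\<forall>i<d. \<forall>j<d. eventually (\<lambda>k. P k i j) F) \<Longrightarrow> eventually (\<lambda>k. \<forall>i<d. \<forall>j<d. P k i j) F"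
  by (rule ev_all1, intro allI impI, rule ev_all1) auto

lemma pattern:
  fixes a b :: "nat \<Rightarrow> 'x"
  assumes fin: "finite I" and ne: "\<forall>i\<in>I. \<forall>j\<in>I. a i \<noteq> a j \<longrightarrow> b i \<noteq> b j"
    and le: "card (b ` I) \<le> card (a ` I)"
  shows "\<forall>i\<in>I. \<forall>j\<in>I. a i = a j \<longrightarrow> b i = b j" "card (b ` I) = card (a ` I)"
proof -
  define h where "h y = a (SOME i. i \<in> I \<and> b i = y)" for y
  have hb: "h (b i) = a i" if "i \<in> I" for i
  proof -
    have "\<exists>i'. i' \<in> I \<and> b i' = b i" using that by blast
    then have "(SOME i'. i' \<in> I \<and> b i' = b i) \<in> I \<and> b (SOME i'. i' \<in> I \<and> b i' = b i) = b i"
      by (rule someI_ex)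
    then show ?thesis unfolding h_def using ne that by metis
  qed
  have im: "h ` (b ` I) = a ` I" using hb by (auto simp: image_iff)
  have "card (a ` I) \<le> card (b ` I)" unfolding im[symmetric] by (rule card_image_le) (use fin in simp)
  then show cb: "card (b ` I) = card (a ` I)" using le by simp
  have "inj_on h (b ` I)" by (rule eq_card_imp_inj_on) (use fin im cb in auto)
  then show "\<forall>i\<in>I. \<forall>j\<in>I. a i = a j \<longrightarrow> b i = b j" using hb unfolding inj_on_def by (metis imageI)
qed

lemma recombine:
  assumes P: "unitary_mat d P" and D: "real_diagonal_mat d D" and AP: "A = P * D * mat_adjoint P"
    and Q0: "unitary_mat d Q0" and F0: "real_diagonal_mat d F0" and AQ: "A = Q0 * F0 * mat_adjoint Q0"
    and Qn: "unitary_mat d Qn" and Fn: "real_diagonal_mat d Fn" and Bn: "Bn = Qn * Fn * mat_adjoint Qn"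
    and pat: "\<forall>i<d. \<forall>j<d. F0 $$ (i,i) = F0 $$ (j,j) \<longrightarrow> Fn $$ (i,i) = Fn $$ (j,j)"
    and E2: "\<forall>i<d. cmod (Fn $$ (i,i) - F0 $$ (i,i)) < \<epsilon>"
    and E3: "\<forall>i<d. \<forall>j<d. cmod ((Qn * (mat_adjoint Q0 * P)) $$ (i,j) - P $$ (i,j)) < \<epsilon>"
  shows "\<exists>Q F. unitary_mat d Q \<and> real_diagonal_mat d F \<and> Bn = Q * F * mat_adjoint Q \<and>
              (\<forall>i<d. cmod (D $$ (i,i) - F $$ (i,i)) < \<epsilon>) \<and>
              (\<forall>i<d. \<forall>j<d. cmod (Q $$ (i,j) - P $$ (i,j)) < \<epsilon>)"
proof -
  have Pc: "P \<in> carrier_mat d d" "mat_adjoint P \<in> carrier_mat d d" using P unitary_carrier by auto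
  have Q0c: "Q0 \<in> carrier_mat d d" "mat_adjoint Q0 \<in> carrier_mat d d" using Q0 unitary_carrier by auto
  have Qnc: "Qn \<in> carrier_mat d d" "mat_adjoint Qn \<in> carrier_mat d d" using Qn unitary_carrier by auto
  have Dc: "D \<in> carrier_mat d d" "diagonal_mat D" using D unfolding real_diagonal_mat_def by auto
  have F0c: "F0 \<in> carrier_mat d d" "diagonal_mat F0" using F0 unfolding real_diagonal_mat_def by auto
  have Fnc: "Fn \<in> carrier_mat d d" "diagonal_mat Fn" using Fn unfolding real_diagonal_mat_def by auto
  define U where "U = mat_adjoint Q0 * P"
  have Uu: "unitary_mat d U" unfolding U_def by (rule unitary_mult[OF unitary_adj[OF Q0] P])
  have Uc: "U \<in> carrier_mat d d" "mat_adjoint U \<in> carrier_mat d d" using Uu unitary_carrier by auto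
  have Ac: "A \<in> carrier_mat d d" unfolding AP using Pc Dc by simp
  have "A * P = P * D"
    unfolding AP using Pc Dc unitary_cancel[OF P] by (simp add: sq_assoc[of _ d])
  then have "U * D = mat_adjoint Q0 * (A * P)" unfolding U_def using Q0c Pc Dc by (simp add: sq_assoc[of _ d])
  moreover have "F0 * U = mat_adjoint Q0 * (A * P)"
  proof -
    have "F0 = mat_adjoint Q0 * A * Q0" unfolding AQ using Q0c F0c unitary_cancel[OF Q0] by (simp add: sq_assoc[of _ d])
    then show ?thesis unfolding U_def using Q0c Pc Ac unitary_cancel[OF Q0] by (simp add: sq_assoc[of _ d])
  qed
  ultimately have FU: "F0 * U = U * D" by simp
  have Unz: "F0 $$ (i,i) = D $$ (j,j)" if "i < d" "j < d" "U $$ (i,j) \<noteq> 0" for i j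
  proof -
    have "F0 $$ (i,i) * U $$ (i,j) = U $$ (i,j) * D $$ (j,j)"
      using arg_cong[OF FU, of "\<lambda>M. M $$ (i,j)"] diag_mult_left[OF F0c Uc(1) that(1,2)]
        diag_mult_right[OF Dc Uc(1) that(1,2)] by simp
    then show ?thesis using that(3) by simp
  qed
  define \<iota> where "\<iota> j = (SOME i. i < d \<and> U $$ (i,j) \<noteq> 0)" for j
  have \<iota>: "\<iota> j < d \<and> U $$ (\<iota> j, j) \<noteq> 0" if "j < d" for j
    unfolding \<iota>_def by (rule someI_ex) (use unitary_col_nonzero[OF Uu that] in auto)
  define G where "G = mat d d (\<lambda>(i,j). if i = j then Fn $$ (\<iota> j, \<iota> j) else 0)"
  have Gc: "G \<in> carrier_mat d d" unfolding G_def by simp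
  have Gd: "diagonal_mat G" unfolding G_def diagonal_mat_def by auto
  have FnU: "Fn * U = U * G"
  proof (rule eq_matI)
    fix i j assume "i < dim_row (U * G)" "j < dim_col (U * G)"
    then have i: "i < d" and j: "j < d" using Uc Gc by auto
    have l: "(Fn * U) $$ (i,j) = Fn $$ (i,i) * U $$ (i,j)" by (rule diag_mult_left[OF Fnc Uc(1) i j])
    have r: "(U * G) $$ (i,j) = U $$ (i,j) * Fn $$ (\<iota> j, \<iota> j)"
      using diag_mult_right[OF Gc Gd Uc(1) i j] j unfolding G_def by simp
    show "(Fn * U) $$ (i,j) = (U * G) $$ (i,j)"
    proof (cases "U $$ (i,j) = 0")
      case True then show ?thesis using l r by simp
    next
      case False
      then have "F0 $$ (i,i) = F0 $$ (\<iota> j, \<iota> j)" using Unz[OF i j] Unz[of "\<iota> j" j] \<iota>[OF j] j by simp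
      then have "Fn $$ (i,i) = Fn $$ (\<iota> j, \<iota> j)" using pat i \<iota>[OF j] by blast
      then show ?thesis using l r by simp
    qed
  qed (use Fnc Uc Gc in auto)
  define Q where "Q = Qn * U"
  have Qu: "unitary_mat d Q" unfolding Q_def by (rule unitary_mult[OF Qn Uu])
  have "Q * G * mat_adjoint Q = Qn * (U * G) * mat_adjoint U * mat_adjoint Qn"
    unfolding Q_def using Qnc Uc Gc by (simp add: sq_assoc[of _ d] adj_mult[of _ d d _ d])
  also have "\<dots> = Qn * (Fn * U) * mat_adjoint U * mat_adjoint Qn" by (simp add: FnU)
  also have "\<dots> = Qn * Fn * mat_adjoint Qn"
    using Qnc Uc Fnc unitary_cancel[OF Uu] by (simp add: sq_assoc[of _ d])
  finally have BQ: "Bn = Q * G * mat_adjoint Q" unfolding Bn by simp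
  have Gr: "real_diagonal_mat d G"
    unfolding real_diagonal_mat_def using Gc Gd \<iota> Fn unfolding real_diagonal_mat_def G_def by auto
  have closeD: "\<forall>i<d. cmod (D $$ (i,i) - G $$ (i,i)) < \<epsilon>"
  proof (intro allI impI)
    fix j assume j: "j < d"
    have "D $$ (j,j) = F0 $$ (\<iota> j, \<iota> j)" using Unz[of "\<iota> j" j] \<iota>[OF j] j by simp
    then have "cmod (D $$ (j,j) - G $$ (j,j)) = cmod (Fn $$ (\<iota> j, \<iota> j) - F0 $$ (\<iota> j, \<iota> j))"
      unfolding G_def using j by (simp add: norm_minus_commute)
    then show "cmod (D $$ (j,j) - G $$ (j,j)) < \<epsilon>" using E2 \<iota>[OF j] by simp
  qed
  have closeQ: "\<forall>i<d. \<forall>j<d. cmod (Q $$ (i,j) - P $$ (i,j)) < \<epsilon>" using E3 unfolding Q_def U_def .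
  show ?thesis using Qu Gr BQ closeD closeQ by blast
qed



theorem lemma3p6:
  fixes d r l :: nat and ls :: "nat \<Rightarrow> nat" and A P D :: "complex mat"
  assumes "d \<ge> 2" and "r \<ge> 1"
    and "\<forall>j\<in>{1..r}. ls j \<in> {1..d}"
    and "(\<Sum>j=1..r. ls j) \<le> d"
    and "l = d - (\<Sum>j=1..r. ls j - 1)"
    and "A \<in> Hset d r ls"
    and "unitary_mat d P" and "real_diagonal_mat d D"
    and "A = P * D * mat_adjoint P"
    and "card {e. eigenvalue A e} = l"
  shows "\<forall>\<epsilon>>0. \<exists>\<delta>>0. \<forall>B\<in>Hset d r ls.
           (\<forall>i<d. \<forall>j<d. cmod (A $$ (i,j) - B $$ (i,j)) < \<delta>) \<longrightarrow>
           card {e. eigenvalue B e} = l \<and>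
           (\<exists>Q F. unitary_mat d Q \<and> real_diagonal_mat d F \<and> B = Q * F * mat_adjoint Q \<and>
              (\<forall>i<d. cmod (D $$ (i,i) - F $$ (i,i)) < \<epsilon>) \<and>
              (\<forall>i<d. \<forall>j<d. cmod (Q $$ (i,j) - P $$ (i,j)) < \<epsilon>))"
proof (intro allI impI)
  fix \<epsilon> :: real assume \<epsilon>: "\<epsilon> > 0"
  define GOOD where "GOOD B \<longleftrightarrow> card {e. eigenvalue B e} = l \<and>
           (\<exists>Q F. unitary_mat d Q \<and> real_diagonal_mat d F \<and> B = Q * F * mat_adjoint Q \<and>
              (\<forall>i<d. cmod (D $$ (i,i) - F $$ (i,i)) < \<epsilon>) \<and>
              (\<forall>i<d. \<forall>j<d. cmod (Q $$ (i,j) - P $$ (i,j)) < \<epsilon>))" for B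
  define CL where "CL B \<delta> \<longleftrightarrow> (\<forall>i<d. \<forall>j<d. cmod (A $$ (i,j) - B $$ (i,j)) < \<delta>)" for B and \<delta> :: real
  have "\<exists>\<delta>>0. \<forall>B\<in>Hset d r ls. CL B \<delta> \<longrightarrow> GOOD B"
  proof (rule ccontr)
  assume neg: "\<not> (\<exists>\<delta>>0. \<forall>B\<in>Hset d r ls. CL B \<delta> \<longrightarrow> GOOD B)"
  have "\<forall>k. \<exists>B. B \<in> Hset d r ls \<and> (\<forall>i<d. \<forall>j<d. cmod (A $$ (i,j) - B $$ (i,j)) < 1 / real (Suc k)) \<and> \<not> GOOD B"
  proof
    fix k
    have pos: "(0::real) < 1 / real (Suc k)" by simp
    have "\<not> (\<forall>B\<in>Hset d r ls. CL B (1 / real (Suc k)) \<longrightarrow> GOOD B)" using neg pos by blast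
    then show "\<exists>B. B \<in> Hset d r ls \<and> (\<forall>i<d. \<forall>j<d. cmod (A $$ (i,j) - B $$ (i,j)) < 1 / real (Suc k)) \<and> \<not> GOOD B"
      unfolding CL_def by blast
  qed
  from choice[OF this] obtain Bs where Bs: "\<And>k. Bs k \<in> Hset d r ls"
    "\<And>k. \<forall>i<d. \<forall>j<d. cmod (A $$ (i,j) - Bs k $$ (i,j)) < 1 / real (Suc k)"
    "\<And>k. \<not> GOOD (Bs k)" by blast
  have hB: "hermitian_mat d (Bs k)" for k using Bs(1)[of k] unfolding Hset_def by auto
  have "\<forall>k. \<exists>QF. unitary_mat d (fst QF) \<and> real_diagonal_mat d (snd QF) \<and> Bs k = fst QF * snd QF * mat_adjoint (fst QF)"
    using spectral[OF hB] by auto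
  from choice[OF this] obtain QF where QF: "\<forall>k. unitary_mat d (fst (QF k)) \<and> real_diagonal_mat d (snd (QF k)) \<and>
     Bs k = fst (QF k) * snd (QF k) * mat_adjoint (fst (QF k))" by blast
  define Qs where "Qs k = fst (QF k)" for k
  define Fs where "Fs k = snd (QF k)" for k
  have Qs: "unitary_mat d (Qs k)" and Fs: "real_diagonal_mat d (Fs k)" and BsQF: "Bs k = Qs k * Fs k * mat_adjoint (Qs k)" for k
    using QF unfolding Qs_def Fs_def by auto
  have Qsc: "Qs k \<in> carrier_mat d d" "mat_adjoint (Qs k) \<in> carrier_mat d d" for k using Qs unitary_carrier by auto
  have Fsc: "Fs k \<in> carrier_mat d d" "diagonal_mat (Fs k)" for k using Fs unfolding real_diagonal_mat_def by auto
  obtain \<sigma> Q0 where \<sigma>: "strict_mono \<sigma>" and mQ: "mconv d (\<lambda>k. Qs (\<sigma> k)) Q0" and Q0: "unitary_mat d Q0"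
    using unitary_subseq[where Q=Qs and n=d] Qs by blast
  have Q0c: "Q0 \<in> carrier_mat d d" "mat_adjoint Q0 \<in> carrier_mat d d" using Q0 unitary_carrier by auto
  have Pc: "P \<in> carrier_mat d d" "mat_adjoint P \<in> carrier_mat d d" using assms(7) unitary_carrier by auto
  have Dc: "D \<in> carrier_mat d d" "diagonal_mat D" using assms(8) unfolding real_diagonal_mat_def by auto
  have Ac: "A \<in> carrier_mat d d" using assms(6) unfolding Hset_def hermitian_mat_def by auto
  have Bsc: "Bs k \<in> carrier_mat d d" for k using hB[of k] unfolding hermitian_mat_def by auto
  have "mconv d Bs A" unfolding mconv_def
  proof (intro conjI allI impI)
    show "Bs k \<in> carrier_mat d d" for k by (rule Bsc)
    show "A \<in> carrier_mat d d" by (rule Ac)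
    fix i j assume "i < d" "j < d"
    then show "(\<lambda>k. Bs k $$ (i,j)) \<longlonglongrightarrow> A $$ (i,j)" using Bs(2) by (intro conv_of_close) auto
  qed
  then have mB: "mconv d (\<lambda>k. Bs (\<sigma> k)) A" by (rule mconv_subseq[OF _ \<sigma>])
  have Fs_eq: "Fs k = mat_adjoint (Qs k) * Bs k * Qs k" for k
    unfolding BsQF using Qsc Fsc unitary_cancel[OF Qs[of k] Fsc(1)[of k]] right_mult_one_mat[OF Fsc(1)[of k]] by (simp add: sq_assoc[of _ d])
  define F0 where "F0 = mat_adjoint Q0 * A * Q0"
  have "mconv d (\<lambda>k. mat_adjoint (Qs (\<sigma> k)) * Bs (\<sigma> k) * Qs (\<sigma> k)) F0"
    unfolding F0_def by (rule mconv_mult[OF mconv_mult[OF mconv_adj[OF mQ] mB] mQ])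
  then have mF: "mconv d (\<lambda>k. Fs (\<sigma> k)) F0" unfolding Fs_eq .
  have F0c: "F0 \<in> carrier_mat d d" unfolding F0_def using Q0c Ac by simp
  have Fconv: "(\<lambda>k. Fs (\<sigma> k) $$ (i,j)) \<longlonglongrightarrow> F0 $$ (i,j)" if "i < d" "j < d" for i j
    using mF that unfolding mconv_def by auto
  have F0r: "real_diagonal_mat d F0" unfolding real_diagonal_mat_def diagonal_mat_def
  proof (intro conjI allI impI)
    show "F0 \<in> carrier_mat d d" by (rule F0c)
  next
    fix i j assume ij: "i < dim_row F0" "j < dim_col F0" "i \<noteq> j"
    then have i: "i < d" and j: "j < d" using F0c by auto
    have "(\<lambda>k. Fs (\<sigma> k) $$ (i,j)) = (\<lambda>k. 0)"
    proof (rule ext)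
      fix k' show "Fs (\<sigma> k') $$ (i,j) = 0"
        using Fsc(1)[of "\<sigma> k'"] Fsc(2)[of "\<sigma> k'"] i j ij(3) unfolding diagonal_mat_def by auto
    qed
    then have "(\<lambda>k. 0) \<longlonglongrightarrow> F0 $$ (i,j)" using Fconv[OF i j] by simp
    then show "F0 $$ (i,j) = 0" using LIMSEQ_unique[OF tendsto_const] by metis
  next
    fix i assume i: "i < d"
    have "(\<lambda>k. Im (Fs (\<sigma> k) $$ (i,i))) \<longlonglongrightarrow> Im (F0 $$ (i,i))" by (intro tendsto_Im Fconv[OF i i])
    moreover have "(\<lambda>k. Im (Fs (\<sigma> k) $$ (i,i))) = (\<lambda>k. 0)"
    proof (rule ext)
      fix k' show "Im (Fs (\<sigma> k') $$ (i,i)) = 0"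
        using Fs[of "\<sigma> k'"] i unfolding real_diagonal_mat_def by (auto simp: complex_is_Real_iff)
    qed
    ultimately have "Im (F0 $$ (i,i)) = 0" using LIMSEQ_unique[OF tendsto_const] by metis
    then show "F0 $$ (i,i) \<in> \<real>" by (simp add: complex_is_Real_iff)
  qed
  have F0d: "diagonal_mat F0" using F0r unfolding real_diagonal_mat_def by auto
  have AQ: "A = Q0 * F0 * mat_adjoint Q0"
    unfolding F0_def using Q0c Ac unitary_cancel[OF Q0 Ac] unitary_cancel(3,4)[OF Q0 Q0c(1)] by (simp add: sq_assoc[of _ d])
  have cardF0: "card ((\<lambda>i. F0 $$ (i,i)) ` {..<d}) = l"
    using assms(10) unfolding AQ eigenvalues_UDU[OF Q0 F0c F0d] .
  have ev1: "eventually (\<lambda>k. \<forall>i<d. \<forall>j<d. F0 $$ (i,i) \<noteq> F0 $$ (j,j) \<longrightarrow> Fs (\<sigma> k) $$ (i,i) \<noteq> Fs (\<sigma> k) $$ (j,j)) sequentially"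
  proof (rule ev_all2, intro allI impI)
    fix i j assume i: "i < d" and j: "j < d"
    show "eventually (\<lambda>k. F0 $$ (i,i) \<noteq> F0 $$ (j,j) \<longrightarrow> Fs (\<sigma> k) $$ (i,i) \<noteq> Fs (\<sigma> k) $$ (j,j)) sequentially"
    proof (cases "F0 $$ (i,i) = F0 $$ (j,j)")
      case True then show ?thesis by simp
    next
      case False
      have "(\<lambda>k. Fs (\<sigma> k) $$ (i,i) - Fs (\<sigma> k) $$ (j,j)) \<longlonglongrightarrow> F0 $$ (i,i) - F0 $$ (j,j)"
        by (intro tendsto_diff Fconv i j)
      from tendsto_imp_eventually_ne[OF this, of 0] False
      have "eventually (\<lambda>k. Fs (\<sigma> k) $$ (i,i) - Fs (\<sigma> k) $$ (j,j) \<noteq> 0) sequentially" by simp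
      then show ?thesis by (rule eventually_mono) simp
    qed
  qed
  have ev2: "eventually (\<lambda>k. \<forall>i<d. cmod (Fs (\<sigma> k) $$ (i,i) - F0 $$ (i,i)) < \<epsilon>) sequentially"
  proof (rule ev_all1, intro allI impI)
    fix i assume i: "i < d"
    from tendstoD[OF Fconv[OF i i] \<epsilon>]
    show "eventually (\<lambda>k. cmod (Fs (\<sigma> k) $$ (i,i) - F0 $$ (i,i)) < \<epsilon>) sequentially"
      by (simp add: dist_norm)
  qed
  define U where "U = mat_adjoint Q0 * P"
  have "mconv d (\<lambda>k. Qs (\<sigma> k) * U) (Q0 * U)"
    by (rule mconv_mult[OF mQ mconv_const]) (use Q0c Pc in \<open>simp add: U_def\<close>)
  moreover have "Q0 * U = P" unfolding U_def using unitary_cancel(1)[OF Q0 Pc(1)] .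
  ultimately have mQU: "mconv d (\<lambda>k. Qs (\<sigma> k) * U) P" by simp
  have ev3: "eventually (\<lambda>k. \<forall>i<d. \<forall>j<d. cmod ((Qs (\<sigma> k) * U) $$ (i,j) - P $$ (i,j)) < \<epsilon>) sequentially"
  proof (rule ev_all2, intro allI impI)
    fix i j assume i: "i < d" and j: "j < d"
    have "(\<lambda>k. (Qs (\<sigma> k) * U) $$ (i,j)) \<longlonglongrightarrow> P $$ (i,j)" using mQU i j unfolding mconv_def by auto
    from tendstoD[OF this \<epsilon>]
    show "eventually (\<lambda>k. cmod ((Qs (\<sigma> k) * U) $$ (i,j) - P $$ (i,j)) < \<epsilon>) sequentially"
      by (simp add: dist_norm)
  qed
  from eventually_conj[OF ev1 eventually_conj[OF ev2 ev3]]
  obtain N where N: "\<forall>n\<ge>N. (\<forall>i<d. \<forall>j<d. F0 $$ (i,i) \<noteq> F0 $$ (j,j) \<longrightarrow> Fs (\<sigma> n) $$ (i,i) \<noteq> Fs (\<sigma> n) $$ (j,j)) \<and>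
      (\<forall>i<d. cmod (Fs (\<sigma> n) $$ (i,i) - F0 $$ (i,i)) < \<epsilon>) \<and>
      (\<forall>i<d. \<forall>j<d. cmod ((Qs (\<sigma> n) * U) $$ (i,j) - P $$ (i,j)) < \<epsilon>)"
    unfolding eventually_sequentially by blast
  define k where "k = \<sigma> N"
  have E1: "\<forall>i<d. \<forall>j<d. F0 $$ (i,i) \<noteq> F0 $$ (j,j) \<longrightarrow> Fs k $$ (i,i) \<noteq> Fs k $$ (j,j)"
    and E2: "\<forall>i<d. cmod (Fs k $$ (i,i) - F0 $$ (i,i)) < \<epsilon>"
    and E3: "\<forall>i<d. \<forall>j<d. cmod ((Qs k * (mat_adjoint Q0 * P)) $$ (i,j) - P $$ (i,j)) < \<epsilon>"
    using N[rule_format, of N] unfolding k_def U_def by auto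
  have eigk: "{e. eigenvalue (Bs k) e} = (\<lambda>i. Fs k $$ (i,i)) ` {..<d}"
    unfolding BsQF by (rule eigenvalues_UDU[OF Qs Fsc])
  have hb: "card {e. eigenvalue (Bs k) e} + (\<Sum>j=1..r. ls j) \<le> d + r"
    by (rule Hset_bound[OF Bs(1) Qs Fs BsQF])
  have "(\<Sum>j=1..r. ls j - 1) + (\<Sum>j=1..r. (1::nat)) = (\<Sum>j=1..r. ls j)"
    unfolding sum.distrib[symmetric] using assms(3) by (intro sum.cong) force+
  then have sl: "(\<Sum>j=1..r. ls j - 1) + r = (\<Sum>j=1..r. ls j)" by simp
  have hb': "card ((\<lambda>i. Fs k $$ (i,i)) ` {..<d}) + (\<Sum>j=1..r. ls j) \<le> d + r"
    using hb unfolding eigk .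
  have lsum: "l + (\<Sum>j=1..r. ls j) = d + r" using sl assms(4,5) by linarith
  have cle: "card ((\<lambda>i. Fs k $$ (i,i)) ` {..<d}) \<le> card ((\<lambda>i. F0 $$ (i,i)) ` {..<d})"
    unfolding cardF0 using hb' lsum by linarith
  have ne: "\<forall>i\<in>{..<d}. \<forall>j\<in>{..<d}. F0 $$ (i,i) \<noteq> F0 $$ (j,j) \<longrightarrow> Fs k $$ (i,i) \<noteq> Fs k $$ (j,j)"
    using E1 by blast
  note pt = pattern[of "{..<d}" "\<lambda>i. F0 $$ (i,i)" "\<lambda>i. Fs k $$ (i,i)", OF finite_lessThan ne cle]
  have pat: "\<forall>i<d. \<forall>j<d. F0 $$ (i,i) = F0 $$ (j,j) \<longrightarrow> Fs k $$ (i,i) = Fs k $$ (j,j)"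
    using pt(1) by blast
  have cardk: "card ((\<lambda>i. Fs k $$ (i,i)) ` {..<d}) = card ((\<lambda>i. F0 $$ (i,i)) ` {..<d})"
    by (rule pt(2))
  have "\<exists>Q F. unitary_mat d Q \<and> real_diagonal_mat d F \<and> Bs k = Q * F * mat_adjoint Q \<and>
              (\<forall>i<d. cmod (D $$ (i,i) - F $$ (i,i)) < \<epsilon>) \<and>
              (\<forall>i<d. \<forall>j<d. cmod (Q $$ (i,j) - P $$ (i,j)) < \<epsilon>)"
    by (rule recombine[OF assms(7) assms(8) assms(9) Q0 F0r AQ Qs Fs BsQF pat E2 E3])
  moreover have "card {e. eigenvalue (Bs k) e} = l" using eigk cardk cardF0 by simp
  ultimately have "GOOD (Bs k)" unfolding GOOD_def by blast
  then show False using Bs(3) by blast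
  qed
  then show "\<exists>\<delta>>0. \<forall>B\<in>Hset d r ls.
           (\<forall>i<d. \<forall>j<d. cmod (A $$ (i,j) - B $$ (i,j)) < \<delta>) \<longrightarrow>
           card {e. eigenvalue B e} = l \<and>
           (\<exists>Q F. unitary_mat d Q \<and> real_diagonal_mat d F \<and> B = Q * F * mat_adjoint Q \<and>
              (\<forall>i<d. cmod (D $$ (i,i) - F $$ (i,i)) < \<epsilon>) \<and>
              (\<forall>i<d. \<forall>j<d. cmod (Q $$ (i,j) - P $$ (i,j)) < \<epsilon>))"
    unfolding GOOD_def CL_def .
qed


end
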